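(* Let $p\geq 5$ be a prime, let $G=\mathbb{S}_{2p}$ or $\mathbb{A}_{2p}$, and let $\mathcal{C}$ be a conjugacy class of non-trivial $p$-elements of $G$. Then $K_{\mathcal{C}}$ is irreducible.
   Context: For a finite group $G$ and a subset $\mathcal{C}\subseteq G\setminus\{1\}$ closed under conjugation, the Killing form $K_{\mathcal{C}}$ is the bilinear form on the complex vector space with basis $\mathcal{C}$ given on basis elements by $K_{\mathcal{C}}(a,b)=|C_G(ab)\cap\mathcal{C}|$. $K_{\mathcal{C}}$ is irreducible if the graph with vertex set $\mathcal{C}$, in which distinct $a,b$ are adjacent iff $C_G(ab)\cap\mathcal{C}\neq\emptyset$, is connected, and reducible otherwise. *)

theory Defs
  imports "HOL-Algebra.Sym_Groups" "HOL-Algebra.Multiplicative_Group" "HOL-Computational_Algebra.Primes"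
begin

definition conj_class :: "('a, 'b) monoid_scheme \<Rightarrow> 'a \<Rightarrow> 'a set" where
  "conj_class G a = {g \<otimes>\<^bsub>G\<^esub> a \<otimes>\<^bsub>G\<^esub> inv\<^bsub>G\<^esub> g | g. g \<in> carrier G}"

definition centralizer :: "('a, 'b) monoid_scheme \<Rightarrow> 'a \<Rightarrow> 'a set" where
  "centralizer G x = {g \<in> carrier G. g \<otimes>\<^bsub>G\<^esub> x = x \<otimes>\<^bsub>G\<^esub> g}"

definition p_element :: "('a, 'b) monoid_scheme \<Rightarrow> nat \<Rightarrow> 'a \<Rightarrow> bool" where
  "p_element G p a \<longleftrightarrow> a \<in> carrier G \<and> (\<exists>k. group.ord G a = p ^ k)"

definition killing_edges :: "('a, 'b) monoid_scheme \<Rightarrow> 'a set \<Rightarrow> ('a \<times> 'a) set" where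
  "killing_edges G C = {(a, b). a \<in> C \<and> b \<in> C \<and> a \<noteq> b \<and>
       centralizer G (a \<otimes>\<^bsub>G\<^esub> b) \<inter> C \<noteq> {}}"

definition killing_irreducible :: "('a, 'b) monoid_scheme \<Rightarrow> 'a set \<Rightarrow> bool" where
  "killing_irreducible G C \<longleftrightarrow> (\<forall>a\<in>C. \<forall>b\<in>C. (a, b) \<in> (killing_edges G C)\<^sup>*)"

end

theory Submission
  imports Defs
begin

lemma sym_conj_class:
  "conj_class (sym_group n) a = {g \<circ> a \<circ> inv' g | g. g permutes {1..n}}"
proof -
  have "\<And>g. g \<in> carrier (sym_group n) \<Longrightarrow> g \<otimes>\<^bsub>sym_group n\<^esub> a \<otimes>\<^bsub>sym_group n\<^esub> inv\<^bsub>sym_group n\<^esub> g = g \<circ> a \<circ> inv' g"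
    by (simp add: sym_group_mult)
  then show ?thesis unfolding conj_class_def sym_group_carrier[symmetric]
    by (smt (verit, best) Collect_cong)
qed

lemma sym_centralizer:
  "centralizer (sym_group n) x = {g. g permutes {1..n} \<and> g \<circ> x = x \<circ> g}"
  unfolding centralizer_def by (auto simp: sym_group_carrier sym_group_mult)

lemma sym_edges:
  "killing_edges (sym_group n) C = {(x, y). x \<in> C \<and> y \<in> C \<and> x \<noteq> y \<and>
     (\<exists>c\<in>C. c permutes {1..n} \<and> c \<circ> (x \<circ> y) = (x \<circ> y) \<circ> c)}"
  unfolding killing_edges_def sym_centralizer by (auto simp: sym_group_mult)

lemma inv_comp_perm:
  assumes "g permutes S" "h permutes S"
  shows "inv' (g \<circ> h) = inv' h \<circ> inv' g"
  using assms by (simp add: o_inv_distrib permutes_bij)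

lemma conj_comp:
  assumes "g permutes S" "h permutes S"
  shows "(g \<circ> h) \<circ> a \<circ> inv' (g \<circ> h) = g \<circ> (h \<circ> a \<circ> inv' h) \<circ> inv' g"
  using assms by (simp add: inv_comp_perm comp_assoc)

locale symconj =
  fixes n :: nat and a :: "nat \<Rightarrow> nat"
  assumes a_perm: "a permutes {1..n}"
begin

abbreviation "S \<equiv> {1..n}"
abbreviation "C \<equiv> conj_class (sym_group n) a"
abbreviation "E \<equiv> killing_edges (sym_group n) C"

lemma C_def': "C = {g \<circ> a \<circ> inv' g | g. g permutes S}"
  by (rule sym_conj_class)

lemma a_in_C: "a \<in> C"
  unfolding C_def' by (rule CollectI, rule exI[of _ id]) (auto simp: permutes_id)

lemma C_perm: "b \<in> C \<Longrightarrow> b permutes S"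
  unfolding C_def' using a_perm
  by (auto intro!: permutes_compose permutes_inv)

lemma C_conj: assumes "b \<in> C" "g permutes S" shows "g \<circ> b \<circ> inv' g \<in> C"
proof -
  obtain h where h: "h permutes S" "b = h \<circ> a \<circ> inv' h" using assms(1) unfolding C_def' by auto
  have "g \<circ> b \<circ> inv' g = (g \<circ> h) \<circ> a \<circ> inv' (g \<circ> h)"
    using conj_comp[OF assms(2) h(1)] h(2) by simp
  moreover have "g \<circ> h permutes S" using assms(2) h(1) by (rule permutes_compose[rotated])
  ultimately show ?thesis unfolding C_def' by blast
qed

lemma E_iff: "(x, y) \<in> E \<longleftrightarrow> x \<in> C \<and> y \<in> C \<and> x \<noteq> y \<and>
     (\<exists>c\<in>C. c \<circ> (x \<circ> y) = (x \<circ> y) \<circ> c)"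
  unfolding sym_edges using C_perm by blast

lemma conj_inj:
  assumes "g permutes S" "g \<circ> x \<circ> inv' g = g \<circ> y \<circ> inv' g" shows "x = y"
proof -
  have "inv' g \<circ> (g \<circ> x \<circ> inv' g) \<circ> g = inv' g \<circ> (g \<circ> y \<circ> inv' g) \<circ> g" using assms(2) by simp
  thus ?thesis using assms(1)
    by (auto simp: fun_eq_iff permutes_inverses)
qed

lemma conj_mult:
  assumes "g permutes S"
  shows "(g \<circ> x \<circ> inv' g) \<circ> (g \<circ> y \<circ> inv' g) = g \<circ> (x \<circ> y) \<circ> inv' g"
  using assms by (auto simp: fun_eq_iff permutes_inverses)

lemma E_conj:
  assumes "(x, y) \<in> E" "g permutes S"
  shows "(g \<circ> x \<circ> inv' g, g \<circ> y \<circ> inv' g) \<in> E"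
proof -
  from assms(1) obtain c where c: "c \<in> C" "c \<circ> (x \<circ> y) = (x \<circ> y) \<circ> c" and xy: "x \<in> C" "y \<in> C" "x \<noteq> y"
    unfolding E_iff by blast
  have "(g \<circ> c \<circ> inv' g) \<circ> ((g \<circ> x \<circ> inv' g) \<circ> (g \<circ> y \<circ> inv' g)) =
        g \<circ> (c \<circ> (x \<circ> y)) \<circ> inv' g"
    using assms(2) by (simp add: conj_mult)
  also have "\<dots> = g \<circ> ((x \<circ> y) \<circ> c) \<circ> inv' g" using c(2) by simp
  also have "\<dots> = ((g \<circ> x \<circ> inv' g) \<circ> (g \<circ> y \<circ> inv' g)) \<circ> (g \<circ> c \<circ> inv' g)"
    using assms(2) by (simp add: conj_mult)
  finally have "(g \<circ> c \<circ> inv' g) \<circ> ((g \<circ> x \<circ> inv' g) \<circ> (g \<circ> y \<circ> inv' g)) =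
       ((g \<circ> x \<circ> inv' g) \<circ> (g \<circ> y \<circ> inv' g)) \<circ> (g \<circ> c \<circ> inv' g)" .
  moreover have "g \<circ> c \<circ> inv' g \<in> C" using C_conj c(1) assms(2) by blast
  moreover have "g \<circ> x \<circ> inv' g \<noteq> g \<circ> y \<circ> inv' g" using conj_inj[OF assms(2)] xy(3) by blast
  ultimately show ?thesis unfolding E_iff using C_conj xy assms(2) by blast
qed

lemma Estar_conj:
  assumes "(x, y) \<in> E\<^sup>*" "g permutes S"
  shows "(g \<circ> x \<circ> inv' g, g \<circ> y \<circ> inv' g) \<in> E\<^sup>*"
  using assms(1)
proof (induction rule: rtrancl_induct)
  case base then show ?case by simp
next
  case (step y z)
  then show ?case using E_conj[OF step(2) assms(2)]
    by (meson rtrancl.rtrancl_into_rtrancl)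
qed

lemma E_sym:
  assumes "(x, y) \<in> E" shows "(y, x) \<in> E"
proof -
  from assms obtain c where c: "c \<in> C" "c \<circ> (x \<circ> y) = (x \<circ> y) \<circ> c" and xy: "x \<in> C" "y \<in> C" "x \<noteq> y"
    unfolding E_iff by blast
  have xp: "x permutes S" using C_perm xy(1) by blast
  have ip: "inv' x permutes S" using permutes_inv[OF xp] .
  have "inv' x \<circ> (x \<circ> y) \<circ> inv' (inv' x) = y \<circ> x"
    using xp by (auto simp: fun_eq_iff permutes_inverses permutes_inv_inv)
  moreover have "(inv' x \<circ> c \<circ> inv' (inv' x)) \<circ> (inv' x \<circ> (x \<circ> y) \<circ> inv' (inv' x))
     = (inv' x \<circ> (x \<circ> y) \<circ> inv' (inv' x)) \<circ> (inv' x \<circ> c \<circ> inv' (inv' x))"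
    using conj_mult[OF ip, of c "x \<circ> y"] conj_mult[OF ip, of "x \<circ> y" c] c(2) by simp
  ultimately have "(inv' x \<circ> c \<circ> inv' (inv' x)) \<circ> (y \<circ> x) = (y \<circ> x) \<circ> (inv' x \<circ> c \<circ> inv' (inv' x))"
    by simp
  moreover have "inv' x \<circ> c \<circ> inv' (inv' x) \<in> C" using C_conj[OF c(1) ip] .
  ultimately show ?thesis unfolding E_iff using xy by blast
qed

lemma Estar_sym:
  assumes "(x, y) \<in> E\<^sup>*" shows "(y, x) \<in> E\<^sup>*"
  using assms
proof (induction rule: rtrancl_induct)
  case base then show ?case by simp
next
  case (step y z)
  then show ?case using E_sym[OF step(2)]
    by (meson converse_rtrancl_into_rtrancl)
qed

lemma T_comp:
  assumes "g permutes S" "h permutes S"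
    "(g \<circ> a \<circ> inv' g, a) \<in> E\<^sup>*" "(h \<circ> a \<circ> inv' h, a) \<in> E\<^sup>*"
  shows "((g \<circ> h) \<circ> a \<circ> inv' (g \<circ> h), a) \<in> E\<^sup>*"
proof -
  have "(g \<circ> (h \<circ> a \<circ> inv' h) \<circ> inv' g, g \<circ> a \<circ> inv' g) \<in> E\<^sup>*"
    using Estar_conj[OF assms(4) assms(1)] .
  then show ?thesis using assms(3) conj_comp[OF assms(1,2)]
    by (metis rtrancl_trans)
qed

lemma irreducible_from_transpositions:
  assumes "\<And>u v. u \<in> S \<Longrightarrow> v \<in> S \<Longrightarrow> u \<noteq> v \<Longrightarrow>
     (transpose u v \<circ> a \<circ> transpose u v, a) \<in> E\<^sup>*"
  shows "killing_irreducible (sym_group n) C"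
proof -
  have all: "(g \<circ> a \<circ> inv' g, a) \<in> E\<^sup>*" if "g permutes S" for g
    using that finite_atLeastAtMost
  proof (induction rule: permutes_induct)
    case id then show ?case by simp
  next
    case (swap u v g)
    have tp: "transpose u v permutes S" using swap(1,2) by (rule permutes_swap_id)
    have "(transpose u v \<circ> a \<circ> inv' (transpose u v), a) \<in> E\<^sup>*"
      using assms[OF swap(1-3)] by simp
    then show ?case by (rule T_comp[OF tp swap(4) _ swap(5)])
  qed
  show ?thesis unfolding killing_irreducible_def
  proof (intro ballI)
    fix x y assume "x \<in> C" "y \<in> C"
    then obtain g h where g: "g permutes S" "x = g \<circ> a \<circ> inv' g"
      and h: "h permutes S" "y = h \<circ> a \<circ> inv' h" unfolding C_def' by blast
    have "(x, a) \<in> E\<^sup>*" using all[OF g(1)] g(2) by simp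
    moreover have "(a, y) \<in> E\<^sup>*" using Estar_sym all[OF h(1)] h(2) by simp
    ultimately show "(x, y) \<in> E\<^sup>*" by (rule rtrancl_trans)
  qed
qed

end

lemma perm_from_inj:
  assumes "finite S" "inj_on f S" "f ` S \<subseteq> S" "\<And>x. x \<notin> S \<Longrightarrow> f x = x"
  shows "f permutes S"
  using assms by (intro bij_imp_permutes) (auto simp: bij_betw_def endo_inj_surj)

lemma funpow_in_perm:
  assumes "a permutes S" "y \<in> S" shows "(a ^^ i) y \<in> S"
  using assms(2) by (induction i) (auto simp: permutes_in_image[OF assms(1)])

lemma funpow_out_perm:
  assumes "a permutes S" "y \<notin> S" shows "(a ^^ i) y = y"
  by (induction i) (auto simp: permutes_not_in[OF assms(1,2)])

lemma orbit_inj: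
  assumes "a permutes S" "finite S"
  shows "inj_on (\<lambda>i. (a ^^ i) y) {0..<least_power a y}"
proof -
  have perm: "permutation a" using assms permutation_permutes by blast
  have "distinct (map (\<lambda>i. (a ^^ i) y) [0..<least_power a y])"
    using cycle_of_permutation[OF perm, of y] by simp
  then show ?thesis by (simp add: distinct_map)
qed

lemma period_p:
  assumes "prime p" "p \<ge> 3" "a permutes {1..2*p}" "a ^^ (p ^ k) = id"
  shows "(a ^^ p) y = y"
proof (cases "y \<in> {1..2*p}")
  case False then show ?thesis using funpow_out_perm[OF assms(3)] by blast
next
  case True
  have perm: "permutation a" using assms(3) permutation_permutes by blast
  define lp where "lp = least_power a y"
  have "(a ^^ (p ^ k)) y = y" using assms(4) by simp
  then have "lp dvd p ^ k" unfolding lp_def by (rule least_power_minimal)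
  then obtain i where i: "i \<le> k" "lp = p ^ i" using divides_primepow_nat[OF assms(1)] by blast
  have inj: "inj_on (\<lambda>i. (a ^^ i) y) {0..<lp}" unfolding lp_def
    using orbit_inj[OF assms(3)] by simp
  have sub: "(\<lambda>i. (a ^^ i) y) ` {0..<lp} \<subseteq> {1..2*p}"
    using funpow_in_perm[OF assms(3) True] by blast
  have "lp = card ((\<lambda>i. (a ^^ i) y) ` {0..<lp})" using card_image[OF inj] by simp
  also have "\<dots> \<le> card {1..2*p}" using sub by (intro card_mono) auto
  finally have le: "lp \<le> 2 * p" by simp
  have "i \<le> 1"
  proof (rule ccontr)
    assume "\<not> i \<le> 1"
    then have "p ^ 2 \<le> p ^ i" using assms(1) prime_ge_1_nat
      by (intro power_increasing) auto
    moreover have "p ^ 2 > 2 * p" using assms(2) by (simp add: power2_eq_square)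
    ultimately show False using le i(2) by simp
  qed
  then have "lp dvd p" using i(2) by (cases i) auto
  then show ?thesis using least_power_dvd[OF perm] unfolding lp_def by blast
qed

lemma orbit_p:
  assumes "prime p" "p \<ge> 3" "a permutes {1..2*p}" "a ^^ (p ^ k) = id" "a x \<noteq> x"
  shows "inj_on (\<lambda>i. (a ^^ i) x) {0..<p}"
proof -
  have perm: "permutation a" using assms(3) permutation_permutes by blast
  have "least_power a x dvd p" using period_p[OF assms(1-4)] by (rule least_power_minimal)
  moreover have "least_power a x \<noteq> 1"
    using least_power_of_permutation(1)[OF perm, of x] assms(5) by auto
  ultimately have "least_power a x = p" using assms(1) by (meson prime_nat_iff)
  then show ?thesis using orbit_inj[OF assms(3)] by fastforce
qed

definition s1 :: "nat \<Rightarrow> nat \<Rightarrow> nat" where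
  "s1 p k = (if 1 \<le> k \<and> k < p then Suc k else if k = p then 1 else k)"

definition s2 :: "nat \<Rightarrow> nat \<Rightarrow> nat" where
  "s2 p k = (if 1 \<le> k \<and> k < p then Suc k else if k = p then 1
             else if p < k \<and> k < 2*p then Suc k else if k = 2*p then Suc p else k)"

lemma classify:
  assumes p: "prime p" "p \<ge> 3" and ap: "a permutes {1..2*p}" and an: "a \<noteq> id"
    and ak: "a ^^ (p ^ k) = id"
  shows "(\<exists>f. f permutes {1..2*p} \<and> a \<circ> f = f \<circ> s1 p) \<or>
         (\<exists>f. f permutes {1..2*p} \<and> a \<circ> f = f \<circ> s2 p)"
proof -
  let ?S = "{1..2*p}"
  have p0: "p > 0" using p by auto
  have per: "\<And>y. (a ^^ p) y = y" using period_p[OF p ap ak] .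
  have fmod: "(a ^^ m) y = (a ^^ (m mod p)) y" for m y
    using funpow_mod_eq[where f=a and n=p and x=y and m=m] per by simp
  have orb: "(a ^^ m) y \<in> (\<lambda>i. (a ^^ i) y) ` {0..<p}" for m y
    using fmod[of m y] p0 by auto
  have asuc: "a ((a ^^ m) y) = (a ^^ Suc m) y" for m y by simp
  obtain x where x: "a x \<noteq> x" using an by (auto simp: fun_eq_iff)
  have xS: "x \<in> ?S" using x permutes_not_in[OF ap] by blast
  define O1 where "O1 = (\<lambda>i. (a ^^ i) x) ` {0..<p}"
  have inj1: "inj_on (\<lambda>i. (a ^^ i) x) {0..<p}" using orbit_p[OF p ap ak x] .
  have O1S: "O1 \<subseteq> ?S" using funpow_in_perm[OF ap xS] by (auto simp: O1_def)
  have cO1: "card O1 = p" using card_image[OF inj1] O1_def by simp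
  have O1cl: "(a ^^ m) x \<in> O1" for m using orb[of m x] O1_def by simp
  show ?thesis
  proof (cases "\<forall>y\<in>?S - O1. a y = y")
    case True
    have "card (?S - O1) = p" using card_Diff_subset[OF finite_subset[OF O1S] O1S] cO1 by simp
    moreover have "card {p+1..2*p} = p" by simp
    ultimately obtain h where h: "bij_betw h {p+1..2*p} (?S - O1)"
      using finite_same_card_bij[of "{p+1..2*p}" "?S - O1"] by auto
    define f where "f i = (if 1 \<le> i \<and> i \<le> p then (a ^^ (i - 1)) x
        else if p < i \<and> i \<le> 2*p then h i else i)" for i
    have hS: "h i \<in> ?S - O1" if "p < i" "i \<le> 2*p" for i
      using h that unfolding bij_betw_def by auto
    have fp: "f permutes ?S"
    proof (rule perm_from_inj)
      show "inj_on f ?S"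
      proof (rule inj_onI)
        fix i j assume ij: "i \<in> ?S" "j \<in> ?S" "f i = f j"
        consider "i \<le> p" "j \<le> p" | "i \<le> p" "\<not> j \<le> p" | "\<not> i \<le> p" "j \<le> p" | "\<not> i \<le> p" "\<not> j \<le> p"
          by blast
        then show "i = j"
        proof cases
          case 1
          then have "(a ^^ (i - 1)) x = (a ^^ (j - 1)) x" using ij by (simp add: f_def)
          then have "i - 1 = j - 1" using inj_onD[OF inj1] 1 ij by auto
          then show ?thesis using ij by auto
        next
          case 2
          then show ?thesis using ij O1cl[of "i - 1"] hS[of j] by (auto simp: f_def)
        next
          case 3
          then show ?thesis using ij O1cl[of "j - 1"] hS[of i] by (auto simp: f_def)
        next
          case 4
          then have "h i = h j" using ij by (simp add: f_def)
          then show ?thesis using h 4 ij unfolding bij_betw_def by (auto dest: inj_onD)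
        qed
      qed
      show "f ` ?S \<subseteq> ?S" using O1S O1cl hS by (auto simp: f_def)
      show "\<And>i. i \<notin> ?S \<Longrightarrow> f i = i" by (auto simp: f_def)
    qed simp
    have "a \<circ> f = f \<circ> s1 p"
    proof
      fix i
      consider "1 \<le> i" "i < p" | "i = p" | "p < i" "i \<le> 2*p" | "i \<notin> ?S" by force
      then show "(a \<circ> f) i = (f \<circ> s1 p) i"
      proof cases
        case 1
        then have "Suc (i - 1) = i" by simp
        then show ?thesis using 1 asuc[of "i - 1" x] by (auto simp: f_def s1_def simp del: funpow.simps)
      next
        case 2
        then have "Suc (p - 1) = p" using p0 by simp
        then show ?thesis using 2 per[of x] asuc[of "p - 1" x] by (auto simp: f_def s1_def simp del: funpow.simps)
      next
        case 3 then show ?thesis using True hS[of i] by (auto simp: f_def s1_def)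
      next
        case 4 then show ?thesis using p0 permutes_not_in[OF ap 4] by (auto simp: f_def s1_def)
      qed
    qed
    then show ?thesis using fp by blast
  next
    case False
    then obtain y where y: "y \<in> ?S" "y \<notin> O1" "a y \<noteq> y" by blast
    define O2 where "O2 = (\<lambda>i. (a ^^ i) y) ` {0..<p}"
    have inj2: "inj_on (\<lambda>i. (a ^^ i) y) {0..<p}" using orbit_p[OF p ap ak y(3)] .
    have O2S: "O2 \<subseteq> ?S" using funpow_in_perm[OF ap y(1)] by (auto simp: O2_def)
    have cO2: "card O2 = p" using card_image[OF inj2] O2_def by simp
    have O2cl: "(a ^^ m) y \<in> O2" for m using orb[of m y] O2_def by simp
    have disj: "(a ^^ m) y \<notin> O1" for m
    proof
      assume "(a ^^ m) y \<in> O1"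
      then obtain j where j: "(a ^^ m) y = (a ^^ j) x" unfolding O1_def by auto
      have "(a ^^ (p * m - m)) ((a ^^ m) y) = (a ^^ (p * m)) y"
        using p0 by (simp add: funpow_add[symmetric, THEN fun_cong, simplified])
      also have "\<dots> = y" using fmod[of "p * m" y] by simp
      finally have "y = (a ^^ (p * m - m + j)) x" using j by (simp add: funpow_add)
      then show False using y(2) O1cl by metis
    qed
    have "O1 \<inter> O2 = {}" using disj unfolding O2_def by auto
    then have "card (O1 \<union> O2) = 2 * p"
      using card_Un_disjoint[OF finite_subset[OF O1S] finite_subset[OF O2S]] cO1 cO2
      by simp
    then have U: "O1 \<union> O2 = ?S" using O1S O2S
      by (metis card_atLeastAtMost card_seteq diff_Suc_1 finite_atLeastAtMost le_sup_iff order_refl)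
    define f where "f i = (if 1 \<le> i \<and> i \<le> p then (a ^^ (i - 1)) x
        else if p < i \<and> i \<le> 2*p then (a ^^ (i - p - 1)) y else i)" for i
    have fp: "f permutes ?S"
    proof (rule perm_from_inj)
      show "inj_on f ?S"
      proof (rule inj_onI)
        fix i j assume ij: "i \<in> ?S" "j \<in> ?S" "f i = f j"
        consider "i \<le> p" "j \<le> p" | "i \<le> p" "\<not> j \<le> p" | "\<not> i \<le> p" "j \<le> p" | "\<not> i \<le> p" "\<not> j \<le> p"
          by blast
        then show "i = j"
        proof cases
          case 1
          then have "(a ^^ (i - 1)) x = (a ^^ (j - 1)) x" using ij by (simp add: f_def)
          then have "i - 1 = j - 1" using inj_onD[OF inj1] 1 ij by auto
          then show ?thesis using ij by auto
        next
          case 2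
          then show ?thesis using ij O1cl[of "i - 1"] disj[of "j - p - 1"] by (auto simp: f_def)
        next
          case 3
          then show ?thesis using ij O1cl[of "j - 1"] disj[of "i - p - 1"] by (auto simp: f_def)
        next
          case 4
          then have "(a ^^ (i - p - 1)) y = (a ^^ (j - p - 1)) y" using ij by (simp add: f_def)
          then have "i - p - 1 = j - p - 1" using inj_onD[OF inj2] 4 ij by auto
          then show ?thesis using ij 4 by auto
        qed
      qed
      show "f ` ?S \<subseteq> ?S" using O1S O1cl O2S O2cl by (auto simp: f_def)
      show "\<And>i. i \<notin> ?S \<Longrightarrow> f i = i" by (auto simp: f_def)
    qed simp
    have "a \<circ> f = f \<circ> s2 p"
    proof
      fix i
      consider "1 \<le> i" "i < p" | "i = p" | "p < i" "i < 2*p" | "i = 2 * p" | "i \<notin> ?S" by force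
      then show "(a \<circ> f) i = (f \<circ> s2 p) i"
      proof cases
        case 1
        then have "Suc (i - 1) = i" by simp
        then show ?thesis using 1 asuc[of "i - 1" x] by (auto simp: f_def s2_def simp del: funpow.simps)
      next
        case 2
        then have "Suc (p - 1) = p" using p0 by simp
        then show ?thesis using 2 per[of x] asuc[of "p - 1" x] by (auto simp: f_def s2_def simp del: funpow.simps)
      next
        case 3
        then have "Suc (i - p - 1) = Suc i - p - 1" by simp
        then show ?thesis using 3 asuc[of "i - p - 1" y] by (auto simp: f_def s2_def simp del: funpow.simps)
      next
        case 4
        then have "Suc (i - p - 1) = p" using p0 by simp
        then show ?thesis using 4 per[of y] asuc[of "i - p - 1" y] by (auto simp: f_def s2_def simp del: funpow.simps)
      next
        case 5 then show ?thesis using p0 permutes_not_in[OF ap 5] by (auto simp: f_def s2_def)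
      qed
    qed
    then show ?thesis using fp by blast
  qed
qed

definition refl1 :: "nat \<Rightarrow> nat \<Rightarrow> nat" where
  "refl1 p k = (if 1 \<le> k \<and> k \<le> p then Suc p - k else k)"

lemma s1_permutes: "p \<ge> 1 \<Longrightarrow> s1 p permutes {1..p}"
  by (rule perm_from_inj) (auto simp: s1_def inj_on_def split: if_splits)

lemma s2_permutes: "p \<ge> 1 \<Longrightarrow> s2 p permutes {1..2*p}"
  by (rule perm_from_inj) (auto simp: s2_def inj_on_def split: if_splits)

lemma refl1_permutes: "refl1 p permutes {1..p}"
  by (rule perm_from_inj) (auto simp: refl1_def inj_on_def split: if_splits)

lemma refl1_invol: "refl1 p \<circ> refl1 p = id"
  by (auto simp: refl1_def fun_eq_iff)

lemma s1_inv: assumes "p \<ge> 1" shows "inv' (s1 p) = refl1 p \<circ> s1 p \<circ> refl1 p"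
proof (rule inv_unique_comp)
  show "s1 p \<circ> (refl1 p \<circ> s1 p \<circ> refl1 p) = id"
  proof
    fix k
    consider "k = 1" | "2 \<le> k" "k \<le> p" | "k = 0 \<or> k > p" by linarith
    then show "(s1 p \<circ> (refl1 p \<circ> s1 p \<circ> refl1 p)) k = id k"
      by cases (use assms in \<open>auto simp: refl1_def s1_def\<close>)
  qed
  show "refl1 p \<circ> s1 p \<circ> refl1 p \<circ> s1 p = id"
  proof
    fix k
    consider "k = p" | "1 \<le> k" "k < p" | "k = 0 \<or> k > p" by linarith
    then show "(refl1 p \<circ> s1 p \<circ> refl1 p \<circ> s1 p) k = id k"
      by cases (use assms in \<open>auto simp: refl1_def s1_def\<close>)
  qed
qed

lemma inv_refl1: "inv' (refl1 p) = refl1 p"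
  by (rule inv_unique_comp) (simp_all add: refl1_invol)

lemma commute_disjoint:
  assumes "inj c" "inj w" "\<And>x. w x \<noteq> x \<Longrightarrow> x \<in> X" "\<And>x. x \<in> X \<Longrightarrow> c x = x"
  shows "c \<circ> w = w \<circ> c"
proof
  fix x
  show "(c \<circ> w) x = (w \<circ> c) x"
  proof (cases "x \<in> X")
    case True
    have "w x \<in> X"
    proof (rule ccontr)
      assume "w x \<notin> X"
      then have "w (w x) = w x" using assms(3) by blast
      then have "w x = x" using assms(2) by (simp add: inj_eq)
      then show False using True \<open>w x \<notin> X\<close> by simp
    qed
    then show ?thesis using True assms(4) by simp
  next
    case False
    have "c x \<notin> X"
    proof
      assume "c x \<in> X"
      then have "c (c x) = c x" using assms(4) by blast
      then have "c x = x" using assms(1) by (simp add: inj_eq)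
      then show False using False \<open>c x \<in> X\<close> by simp
    qed
    then show ?thesis using False assms(3) by (metis comp_apply)
  qed
qed

lemma exists_perm_image:
  assumes "finite S" "U \<subseteq> S" "V \<subseteq> S" "card U = card V"
  shows "\<exists>g. g permutes S \<and> g ` V = U"
proof -
  have fU: "finite U" "finite V" using assms finite_subset by auto
  obtain h1 where h1: "bij_betw h1 V U" using finite_same_card_bij[OF fU(2) fU(1)] assms(4) by auto
  have "card (S - V) = card (S - U)"
    using card_Diff_subset[OF fU(2) assms(3)] card_Diff_subset[OF fU(1) assms(2)] assms(4) by simp
  then obtain h2 where h2: "bij_betw h2 (S - V) (S - U)"
    using finite_same_card_bij[of "S - V" "S - U"] assms(1) by auto
  define g where "g x = (if x \<in> V then h1 x else if x \<in> S then h2 x else x)" for x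
  have im1: "h1 x \<in> U" if "x \<in> V" for x using h1 that bij_betwE by blast
  have im2: "h2 x \<in> S - U" if "x \<in> S - V" for x using h2 that bij_betwE by blast
  have "g permutes S"
  proof (rule perm_from_inj[OF assms(1)])
    show "inj_on g S"
    proof (rule inj_onI)
      fix x y assume xy: "x \<in> S" "y \<in> S" "g x = g y"
      show "x = y"
      proof (cases "x \<in> V")
        case True
        show ?thesis
        proof (cases "y \<in> V")
          case True
          then show ?thesis using \<open>x \<in> V\<close> xy(3) bij_betw_imp_inj_on[OF h1] unfolding g_def
            by (simp add: inj_on_def)
        next
          case False
          then show ?thesis using \<open>x \<in> V\<close> xy im1[of x] im2[of y] unfolding g_def by auto
        qed
      next
        case False
        show ?thesis
        proof (cases "y \<in> V")
          case True
          then show ?thesis using \<open>x \<notin> V\<close> xy im1[of y] im2[of x] unfolding g_def by auto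
        next
          case False
          then show ?thesis using \<open>x \<notin> V\<close> xy bij_betw_imp_inj_on[OF h2] unfolding g_def
            by (simp add: inj_on_def)
        qed
      qed
    qed
    show "g ` S \<subseteq> S" using im1 im2 assms(2) unfolding g_def by auto
    show "\<And>x. x \<notin> S \<Longrightarrow> g x = x" using assms(3) unfolding g_def by auto
  qed
  moreover have "g ` V = U" using bij_betw_imp_surj_on[OF h1] unfolding g_def by auto
  ultimately show ?thesis by blast
qed

lemma exists_perm_cover:
  assumes "finite S" "X \<subseteq> S" "V \<subseteq> S" "card X \<le> card V"
  shows "\<exists>g. g permutes S \<and> X \<subseteq> g ` V"
proof -
  have fX: "finite X" using assms finite_subset by auto
  have "card V - card X \<le> card (S - X)"
    using assms card_Diff_subset[OF fX assms(2)] card_mono[OF assms(1) assms(3)] by linarith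
  then obtain T where T: "T \<subseteq> S - X" "card T = card V - card X" "finite T"
    using obtain_subset_with_card_n by blast
  have "card (X \<union> T) = card V"
    using card_Un_disjoint[OF fX T(3)] T assms(4) by auto
  then obtain g where "g permutes S" "g ` V = X \<union> T"
    using exists_perm_image[OF assms(1) _ assms(3)] T(1) assms(2) by blast
  then show ?thesis by blast
qed

lemma cj_inv:
  assumes "f permutes S" "x permutes S"
  shows "inv' (f \<circ> x \<circ> inv' f) = f \<circ> inv' x \<circ> inv' f"
  by (rule inv_unique_comp)
     (use assms in \<open>auto simp: fun_eq_iff permutes_inverses\<close>)

lemma conj_from_eq:
  assumes "f permutes S" "a \<circ> f = f \<circ> s"
  shows "a = f \<circ> s \<circ> inv' f"
proof -
  have "a = a \<circ> f \<circ> inv' f" using assms(1) by (auto simp: fun_eq_iff permutes_inverses)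
  then show ?thesis using assms(2) by simp
qed

lemma type1:
  assumes p: "prime p" "p \<ge> 5" and fp: "f permutes {1..2*p}" and af: "a \<circ> f = f \<circ> s1 p"
  shows "killing_irreducible (sym_group (2*p)) (conj_class (sym_group (2*p)) a)"
proof -
  let ?S = "{1..2*p}"
  have p1: "p \<ge> 1" using p by simp
  have s1p: "s1 p permutes ?S" using permutes_subset[OF s1_permutes[OF p1]] by auto
  have r1p: "refl1 p permutes ?S" using permutes_subset[OF refl1_permutes] by auto
  have a_eq: "a = f \<circ> s1 p \<circ> inv' f" by (rule conj_from_eq[OF fp af])
  have ap: "a permutes ?S" unfolding a_eq
    by (intro permutes_compose[OF permutes_inv[OF fp]] permutes_compose[OF _ fp] s1p)
  have afk: "a (f k) = f (s1 p k)" for k using fun_cong[OF af, of k] by simp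
  interpret symconj "2*p" a by unfold_locales (rule ap)
  define r where "r = f \<circ> refl1 p \<circ> inv' f"
  have rp: "r permutes ?S" unfolding r_def
    by (intro permutes_compose[OF permutes_inv[OF fp]] permutes_compose[OF _ fp] r1p)
  have inv_r: "inv' r = r" unfolding r_def cj_inv[OF fp r1p] inv_refl1 ..
  have "inv' a = f \<circ> inv' (s1 p) \<circ> inv' f" unfolding a_eq by (rule cj_inv[OF fp s1p])
  also have "\<dots> = f \<circ> (refl1 p \<circ> s1 p \<circ> refl1 p) \<circ> inv' f" using s1_inv[OF p1] by simp
  also have "\<dots> = r \<circ> a \<circ> inv' r" unfolding inv_r unfolding r_def a_eq
    using fp by (auto simp: fun_eq_iff permutes_inverses)
  finally have inv_a: "inv' a = r \<circ> a \<circ> inv' r" .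
  have invC: "inv' a \<in> C" using C_conj[OF a_in_C rp] inv_a by simp
  have a_ne: "a \<noteq> inv' a"
  proof
    assume eq: "a = inv' a"
    have "a (a (f 1)) = f 1" using eq permutes_inverses(1)[OF ap, of "f 1"] by metis
    moreover have "a (a (f 1)) = f 3" using afk p by (simp add: s1_def numeral_3_eq_3)
    ultimately have "f 3 = f 1" by simp
    then show False using permutes_inj[OF fp] by (simp add: inj_eq)
  qed
  have aia: "a \<circ> inv' a = id" using permutes_inv_o(1)[OF ap] .
  have E1: "(a, inv' a) \<in> E" unfolding E_iff using a_in_C invC a_ne aia by auto
  show ?thesis
  proof (rule irreducible_from_transpositions)
    fix u v assume uv: "u \<in> ?S" "v \<in> ?S" "u \<noteq> v"
    let ?t = "transpose u v"
    define b where "b = ?t \<circ> a \<circ> ?t"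
    have bC: "b \<in> C" using C_conj[OF a_in_C permutes_swap_id[OF uv(1,2)]] b_def by simp
    define X where "X = {u, v, inv' a u, inv' a v}"
    have XS: "X \<subseteq> ?S" using uv permutes_in_image[OF permutes_inv[OF ap]] unfolding X_def by auto
    have "card X \<le> 4" unfolding X_def using card_length[of "[u, v, inv' a u, inv' a v]"] by simp
    then have cX: "card X \<le> card {p+1..2*p}" using p by simp
    obtain g where g: "g permutes ?S" "X \<subseteq> g ` {p+1..2*p}"
      using exists_perm_cover[OF _ XS _ cX] by auto
    define c where "c = g \<circ> s1 p \<circ> inv' g"
    have gfp: "g \<circ> inv' f permutes ?S" by (intro permutes_compose[OF permutes_inv[OF fp] g(1)])
    have "(g \<circ> inv' f) \<circ> a \<circ> inv' (g \<circ> inv' f) = c"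
      unfolding inv_comp_perm[OF g(1) permutes_inv[OF fp]] permutes_inv_inv[OF fp] c_def a_eq
      using fp by (auto simp: fun_eq_iff permutes_inverses)
    then have cC: "c \<in> C" using C_conj[OF a_in_C gfp] by simp
    have cfix: "c x = x" if xX: "x \<in> X" for x
    proof -
      obtain y where y: "y \<in> {p+1..2*p}" "x = g y" using g(2) xX by auto
      then have "inv' g x = y" using permutes_inverses(2)[OF g(1)] by simp
      moreover have "s1 p y = y" using y(1) by (simp add: s1_def)
      ultimately show ?thesis unfolding c_def using y by simp
    qed
    define w where "w = inv' a \<circ> b"
    have wfix: "z \<in> X" if "w z \<noteq> z" for z
    proof (rule ccontr)
      assume z: "z \<notin> X"
      then have "a z \<noteq> u" "a z \<noteq> v" using permutes_inverses(2)[OF ap] unfolding X_def by force+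
      then have "w z = z" using z permutes_inverses(2)[OF ap]
        unfolding w_def b_def X_def by simp
      then show False using that by simp
    qed
    have cp: "c permutes ?S" using C_perm[OF cC] .
    have wp: "w permutes ?S" unfolding w_def using C_perm[OF bC] permutes_inv[OF ap]
      by (rule permutes_compose)
    have comm: "c \<circ> w = w \<circ> c"
      by (rule commute_disjoint[OF permutes_inj[OF cp] permutes_inj[OF wp] wfix cfix])
    have E2: "(inv' a, a) \<in> E" using E_sym[OF E1] .
    show "(?t \<circ> a \<circ> ?t, a) \<in> E\<^sup>*"
    proof (cases "inv' a = b")
      case True
      then show ?thesis using E2 b_def by auto
    next
      case False
      have "(inv' a, b) \<in> E" unfolding E_iff using invC bC False cC comm w_def by blast
      then have "(b, inv' a) \<in> E" by (rule E_sym)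
      then show ?thesis using E2 b_def by (meson converse_rtrancl_into_rtrancl r_into_rtrancl)
    qed
  qed
qed

definition Zi :: "nat \<Rightarrow> nat \<Rightarrow> nat" where
  "Zi p m = (if m = 0 then 1 else if m < p then p + 1 + m else if m = p then p + 1 else m - p + 1)"

definition idx :: "nat \<Rightarrow> nat \<Rightarrow> nat" where
  "idx p i = (if i \<le> p then 2 * i - 2 else 2 * (i - p) - 1)"

definition Gi :: "nat \<Rightarrow> nat \<Rightarrow> nat" where
  "Gi p i = (if i \<in> {1..2*p} then Zi p (idx p i) else i)"

lemma Zi_M:
  assumes "p \<ge> 3" "m < 2 * p"
  shows "s2 p (transpose 1 (p+1) (Zi p m)) = Zi p (Suc m mod (2*p))"
proof -
  consider "m = 0" | "1 \<le> m" "m + 2 \<le> p" | "m + 1 = p" | "m = p" | "p + 1 \<le> m" "m + 2 \<le> 2*p"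
    | "m + 1 = 2 * p" using assms by linarith
  then show ?thesis
  proof cases
    case 1
    then have "Suc m mod (2*p) = 1" using assms by simp
    then show ?thesis using 1 assms by (simp add: Zi_def s2_def transpose_def)
  next
    case 2
    then have "Suc m mod (2*p) = Suc m" using assms by simp
    then show ?thesis using 2 assms by (simp add: Zi_def s2_def transpose_def)
  next
    case 3
    then have "Suc m mod (2*p) = p" using assms by simp
    then show ?thesis using 3 assms by (auto simp add: Zi_def s2_def transpose_def)
  next
    case 4
    then have "Suc m mod (2*p) = Suc p" using assms by simp
    then show ?thesis using 4 assms by (simp add: Zi_def s2_def transpose_def)
  next
    case 5
    then have "Suc m mod (2*p) = Suc m" using assms by simp
    then show ?thesis using 5 assms by (auto simp add: Zi_def s2_def transpose_def)
  next
    case 6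
    then have "Suc m mod (2*p) = 0" using assms by simp
    then show ?thesis using 6 assms by (auto simp add: Zi_def s2_def transpose_def)
  qed
qed

lemma idx_lt: "i \<in> {1..2*p} \<Longrightarrow> idx p i < 2 * p"
  by (auto simp: idx_def)

lemma idx_s2:
  assumes "p \<ge> 2" "i \<in> {1..2*p}"
  shows "idx p (s2 p i) = (idx p i + 2) mod (2*p)"
proof -
  consider "1 \<le> i" "i < p" | "i = p" | "p < i" "i < 2*p" | "i = 2*p" using assms by force
  then show ?thesis
  proof cases
    case 1 then show ?thesis using assms by (simp add: idx_def s2_def)
  next
    case 2
    then have "Suc (Suc (2*p-2)) = 2*p" using assms by simp
    then show ?thesis using 2 assms by (simp add: idx_def s2_def)
  next
    case 3
    then have "(2 * (i - p) - 1 + 2) mod (2*p) = 2 * (Suc i - p) - 1" using assms by simp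
    then show ?thesis using 3 assms by (simp add: idx_def s2_def)
  next
    case 4
    then have "(2 * (i - p) - 1 + 2) mod (2*p) = 1" using assms
      by (simp add: mod_if)
    then show ?thesis using 4 assms by (simp add: idx_def s2_def)
  qed
qed

lemma idx_inj: "inj_on (idx p) {1..2*p}"
  unfolding inj_on_def idx_def by (auto split: if_splits; presburger)

lemma Zi_inj: "inj_on (Zi p) {0..<2*p}"
  unfolding inj_on_def Zi_def by (auto split: if_splits)

lemma Zi_range: "m < 2 * p \<Longrightarrow> Zi p m \<in> {1..2*p}"
  by (auto simp: Zi_def)

lemma Gi_permutes: "Gi p permutes {1..2*p}"
proof (rule perm_from_inj)
  show "inj_on (Gi p) {1..2*p}"
  proof (rule inj_onI)
    fix x y assume xy: "x \<in> {1..2*p}" "y \<in> {1..2*p}" "Gi p x = Gi p y"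
    then have "Zi p (idx p x) = Zi p (idx p y)" by (simp add: Gi_def)
    then have "idx p x = idx p y" using inj_onD[OF Zi_inj] idx_lt xy(1,2) by auto
    then show "x = y" using inj_onD[OF idx_inj] xy(1,2) by blast
  qed
  show "Gi p ` {1..2*p} \<subseteq> {1..2*p}" using Zi_range idx_lt by (auto simp: Gi_def)
  show "\<And>x. x \<notin> {1..2*p} \<Longrightarrow> Gi p x = x" unfolding Gi_def by presburger
qed simp

lemma MM_Gi:
  assumes "p \<ge> 3"
  shows "(s2 p \<circ> transpose 1 (p+1)) \<circ> (s2 p \<circ> transpose 1 (p+1)) \<circ> Gi p = Gi p \<circ> s2 p"
proof
  fix i
  have s2p: "s2 p permutes {1..2*p}" using s2_permutes assms by simp
  show "((s2 p \<circ> transpose 1 (p+1)) \<circ> (s2 p \<circ> transpose 1 (p+1)) \<circ> Gi p) i = (Gi p \<circ> s2 p) i"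
  proof (cases "i \<in> {1..2*p}")
    case True
    have m: "idx p i < 2 * p" using idx_lt[OF True] .
    have "((s2 p \<circ> transpose 1 (p+1)) \<circ> (s2 p \<circ> transpose 1 (p+1)) \<circ> Gi p) i
        = s2 p (transpose 1 (p+1) (s2 p (transpose 1 (p+1) (Zi p (idx p i)))))"
      using True by (simp add: Gi_def)
    also have "\<dots> = Zi p (Suc (Suc (idx p i) mod (2*p)) mod (2*p))"
      using Zi_M[OF assms m] Zi_M[OF assms, of "Suc (idx p i) mod (2*p)"] assms by simp
    also have "\<dots> = Zi p ((idx p i + 2) mod (2*p))" by (simp add: mod_Suc_eq)
    also have "\<dots> = Zi p (idx p (s2 p i))" using idx_s2[OF _ True] assms by simp
    also have "\<dots> = Gi p (s2 p i)" using permutes_in_image[OF s2p] True by (simp add: Gi_def)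
    finally show ?thesis by simp
  next
    case False
    have "s2 p i = i" using permutes_not_in[OF s2p False] .
    moreover have "transpose 1 (p+1) i = i" using False assms by (auto simp: transpose_def)
    moreover have "Gi p i = i" using False unfolding Gi_def by presburger
    ultimately show ?thesis using False by simp
  qed
qed


definition blk :: "nat \<Rightarrow> nat \<Rightarrow> nat" where
  "blk p k = (if p < k \<and> k < 2*p then Suc k else if k = 2*p then Suc p else k)"

lemma blk_permutes: "p \<ge> 1 \<Longrightarrow> blk p permutes {1..2*p}"
  by (rule perm_from_inj) (auto simp: blk_def inj_on_def split: if_splits)

lemma s2_split: "p \<ge> 1 \<Longrightarrow> s2 p = s1 p \<circ> blk p"
  by (auto simp: fun_eq_iff s2_def s1_def blk_def)

lemma s1_blk_comm: "p \<ge> 1 \<Longrightarrow> s1 p \<circ> blk p = blk p \<circ> s1 p"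
  by (auto simp: fun_eq_iff s1_def blk_def)

lemma funpow_comm:
  assumes "f \<circ> g = g \<circ> f" shows "(f ^^ m) \<circ> g = g \<circ> (f ^^ m)"
proof -
  have pw: "f (g x) = g (f x)" for x using fun_cong[OF assms, of x] by simp
  have "(f ^^ m) (g x) = g ((f ^^ m) x)" for x by (induction m) (simp_all add: pw)
  then show ?thesis by (simp add: fun_eq_iff)
qed

lemma funpow_fix: "f x = x \<Longrightarrow> (f ^^ m) x = x"
  by (induction m) auto

lemma s1_pow: "m < p \<Longrightarrow> (s1 p ^^ m) 1 = Suc m"
  by (induction m) (auto simp: s1_def)

lemma blk_pow: "m < p \<Longrightarrow> (blk p ^^ m) (Suc p) = Suc p + m"
  by (induction m) (auto simp: blk_def)

lemma rotation:
  assumes "p \<ge> 1" "1 \<le> i" "i \<le> p" "p < j" "j \<le> 2*p"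
  shows "\<exists>\<rho>. \<rho> permutes {1..2*p} \<and> s2 p \<circ> \<rho> = \<rho> \<circ> s2 p \<and> \<rho> 1 = i \<and> \<rho> (Suc p) = j"
proof -
  define \<rho> where "\<rho> = (s1 p ^^ (i - 1)) \<circ> (blk p ^^ (j - p - 1))"
  have s1p: "s1 p permutes {1..2*p}" using permutes_subset[OF s1_permutes[OF assms(1)]] by auto
  have "\<rho> permutes {1..2*p}" unfolding \<rho>_def
    by (intro permutes_compose permutes_funpow s1p blk_permutes assms(1))
  moreover
  have sb: "s1 p (blk p x) = blk p (s1 p x)" for x using fun_cong[OF s1_blk_comm[OF assms(1)], of x] by simp
  have c1: "s1 p \<circ> s2 p = s2 p \<circ> s1 p" unfolding s2_split[OF assms(1)] by (simp add: fun_eq_iff sb)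
  have c2: "blk p \<circ> s2 p = s2 p \<circ> blk p" unfolding s2_split[OF assms(1)] by (simp add: fun_eq_iff sb)
  have "s2 p \<circ> \<rho> = \<rho> \<circ> s2 p" unfolding \<rho>_def
    using funpow_comm[OF c1, of "i - 1"] funpow_comm[OF c2, of "j - p - 1"]
    by (metis comp_assoc)
  moreover
  have "(blk p ^^ (j - p - 1)) 1 = 1" using assms(1) by (intro funpow_fix) (simp add: blk_def)
  then have "\<rho> 1 = i" using s1_pow[of "i - 1" p] assms by (simp add: \<rho>_def)
  moreover
  have "(blk p ^^ (j - p - 1)) (Suc p) = j" using blk_pow[of "j - p - 1" p] assms by simp
  moreover have "(s1 p ^^ (i - 1)) j = j" using assms by (intro funpow_fix) (simp add: s1_def)
  ultimately show ?thesis by (auto simp: \<rho>_def)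
qed

lemma transpose_conj:
  assumes "g permutes S"
  shows "transpose (g x) (g y) = g \<circ> transpose x y \<circ> inv' g"
proof
  fix z
  have b: "bij g" using permutes_bij[OF assms] .
  have "transpose (g x) (g y) (g (inv' g z)) = g (transpose x y (inv' g z))"
    using transpose_apply_commute[OF b, of "g x" "g y" "inv' g z"] b
    by (simp add: bij_is_inj)
  then show "transpose (g x) (g y) z = (g \<circ> transpose x y \<circ> inv' g) z"
    using permutes_inverses(1)[OF assms] by simp
qed


lemma type2:
  assumes p: "prime p" "p \<ge> 5" and fp: "f permutes {1..2*p}" and af: "a \<circ> f = f \<circ> s2 p"
  shows "killing_irreducible (sym_group (2*p)) (conj_class (sym_group (2*p)) a)"
proof -
  let ?S = "{1..2*p}"
  have p1: "p \<ge> 1" and p3: "p \<ge> 3" using p by auto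
  have s2p: "s2 p permutes ?S" using s2_permutes p1 by simp
  have a_eq: "a = f \<circ> s2 p \<circ> inv' f" by (rule conj_from_eq[OF fp af])
  have ap: "a permutes ?S" unfolding a_eq
    by (intro permutes_compose[OF permutes_inv[OF fp]] permutes_compose[OF _ fp] s2p)
  interpret symconj "2*p" a by unfold_locales (rule ap)
  have fS: "f k \<in> ?S" if "k \<in> ?S" for k using permutes_in_image[OF fp] that by simp
  have cross: "(transpose (f i) (f j) \<circ> a \<circ> transpose (f i) (f j), a) \<in> E\<^sup>*"
    if ij: "1 \<le> i" "i \<le> p" "p < j" "j \<le> 2*p" for i j
  proof -
    obtain \<rho> where \<rho>: "\<rho> permutes ?S" "s2 p \<circ> \<rho> = \<rho> \<circ> s2 p" "\<rho> 1 = i" "\<rho> (Suc p) = j"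
      using rotation[OF p1 ij] by blast
    define g where "g = f \<circ> \<rho>"
    have gp: "g permutes ?S" unfolding g_def using \<rho>(1) fp by (rule permutes_compose)
    have ag: "a \<circ> g = g \<circ> s2 p" unfolding g_def using af \<rho>(2) by (metis comp_assoc)
    have a_g: "a = g \<circ> s2 p \<circ> inv' g" by (rule conj_from_eq[OF gp ag])
    have g1: "g 1 = f i" "g (p + 1) = f j" using \<rho> by (auto simp: g_def)
    let ?T = "transpose 1 (p + 1)"
    have t_eq: "transpose (f i) (f j) = g \<circ> ?T \<circ> inv' g"
      using transpose_conj[OF gp, of 1 "p + 1"] g1 by simp
    define b where "b = transpose (f i) (f j) \<circ> a \<circ> transpose (f i) (f j)"
    have tp: "transpose (f i) (f j) permutes ?S" using fS ij by (intro permutes_swap_id) auto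
    have bC: "b \<in> C" using C_conj[OF a_in_C tp] b_def by simp
    have b_g: "b = g \<circ> (?T \<circ> s2 p \<circ> ?T) \<circ> inv' g"
      unfolding b_def t_eq a_g using gp by (auto simp: fun_eq_iff permutes_inverses)
    have ab: "a \<circ> b = g \<circ> ((s2 p \<circ> ?T) \<circ> (s2 p \<circ> ?T)) \<circ> inv' g"
      unfolding b_g using a_g gp by (auto simp: fun_eq_iff permutes_inverses)
    have MM: "(s2 p \<circ> ?T) \<circ> (s2 p \<circ> ?T) = Gi p \<circ> s2 p \<circ> inv' (Gi p)"
      by (rule conj_from_eq[OF Gi_permutes MM_Gi[OF p3]])
    define h where "h = g \<circ> Gi p \<circ> inv' g"
    have hp: "h permutes ?S" unfolding h_def
      by (intro permutes_compose[OF permutes_inv[OF gp]] permutes_compose[OF _ gp] Gi_permutes)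
    have "a \<circ> b = h \<circ> a \<circ> inv' h"
      unfolding ab MM h_def cj_inv[OF gp Gi_permutes] using a_g gp
      by (auto simp: fun_eq_iff permutes_inverses)
    then have abC: "a \<circ> b \<in> C" using C_conj[OF a_in_C hp] by simp
    have ne: "a \<noteq> b"
    proof
      assume "a = b"
      then have e: "a (g (p+1)) = b (g (p+1))" by simp
      have "a (g (p+1)) = g (p+2)" using fun_cong[OF ag, of "p+1"] p by (simp add: s2_def)
      moreover have "b (g (p+1)) = g 2" unfolding b_g using p permutes_inverses(2)[OF gp]
        by (simp add: s2_def transpose_def numeral_2_eq_2)
      ultimately have "g (p+2) = g 2" using e by simp
      then show False using permutes_inj[OF gp] p by (simp add: inj_eq)
    qed
    have "(a, b) \<in> E" unfolding E_iff using a_in_C bC ne abC by blast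
    then have "(b, a) \<in> E" by (rule E_sym)
    then show ?thesis unfolding b_def by blast
  qed
  show ?thesis
  proof (rule irreducible_from_transpositions)
    fix u v assume uv: "u \<in> ?S" "v \<in> ?S" "u \<noteq> v"
    define i where "i = inv' f u"
    define j where "j = inv' f v"
    have ij: "i \<in> ?S" "j \<in> ?S" "u = f i" "v = f j" "i \<noteq> j"
      using uv permutes_in_image[OF permutes_inv[OF fp]] permutes_inverses(1)[OF fp]
      unfolding i_def j_def by (auto, metis)
    have Tt: "(transpose x y \<circ> a \<circ> inv' (transpose x y), a) \<in> E\<^sup>*"
      if "(transpose x y \<circ> a \<circ> transpose x y, a) \<in> E\<^sup>*" for x y using that by simp
    have trip: "(transpose u v \<circ> a \<circ> transpose u v, a) \<in> E\<^sup>*"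
      if w: "w \<in> ?S" "w \<noteq> u" "w \<noteq> v"
        and uw: "(transpose u w \<circ> a \<circ> transpose u w, a) \<in> E\<^sup>*"
        and wv: "(transpose w v \<circ> a \<circ> transpose w v, a) \<in> E\<^sup>*" for w
    proof -
      have tp1: "transpose u w permutes ?S" using uv w by (intro permutes_swap_id) auto
      have tp2: "transpose w v permutes ?S" using uv w by (intro permutes_swap_id) auto
      have 1: "((transpose w v \<circ> transpose u w) \<circ> a \<circ> inv' (transpose w v \<circ> transpose u w), a) \<in> E\<^sup>*"
        by (rule T_comp[OF tp2 tp1 Tt[OF wv] Tt[OF uw]])
      have 2: "((transpose u w \<circ> (transpose w v \<circ> transpose u w)) \<circ> a
            \<circ> inv' (transpose u w \<circ> (transpose w v \<circ> transpose u w)), a) \<in> E\<^sup>*"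
        by (rule T_comp[OF tp1 permutes_compose[OF tp1 tp2] Tt[OF uw] 1])
      have "transpose u w \<circ> (transpose w v \<circ> transpose u w) = transpose u v"
        using transpose_comp_triple[of u v w] uv w by (metis comp_assoc)
      then show ?thesis using 2 by simp
    qed
    consider "i \<le> p" "p < j" | "j \<le> p" "p < i" | "i \<le> p" "j \<le> p" | "p < i" "p < j" by linarith
    then show "(transpose u v \<circ> a \<circ> transpose u v, a) \<in> E\<^sup>*"
    proof cases
      case 1 then show ?thesis using cross[of i j] ij by auto
    next
      case 2
      have "transpose u v = transpose v u" by (rule transpose_commute)
      then show ?thesis using cross[of j i] ij 2 by auto
    next
      case 3
      have w: "f (p+1) \<in> ?S" "f (p+1) \<noteq> u" "f (p+1) \<noteq> v"
        using fS[of "p+1"] ij 3 permutes_inj[OF fp] by (auto simp: inj_eq)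
      have uw: "(transpose u (f (p+1)) \<circ> a \<circ> transpose u (f (p+1)), a) \<in> E\<^sup>*"
        using cross[of i "p+1"] ij 3 by auto
      have "transpose (f (p+1)) v = transpose v (f (p+1))" by (rule transpose_commute)
      then have wv: "(transpose (f (p+1)) v \<circ> a \<circ> transpose (f (p+1)) v, a) \<in> E\<^sup>*"
        using cross[of j "p+1"] ij 3 by auto
      show ?thesis by (rule trip[OF w uw wv])
    next
      case 4
      have w: "f 1 \<in> ?S" "f 1 \<noteq> u" "f 1 \<noteq> v"
        using fS[of 1] ij 4 permutes_inj[OF fp] p by (auto simp: inj_eq)
      have "transpose u (f 1) = transpose (f 1) u" by (rule transpose_commute)
      then have uw: "(transpose u (f 1) \<circ> a \<circ> transpose u (f 1), a) \<in> E\<^sup>*"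
        using cross[of 1 i] ij 4 p by auto
      have wv: "(transpose (f 1) v \<circ> a \<circ> transpose (f 1) v, a) \<in> E\<^sup>*"
        using cross[of 1 j] ij 4 p by auto
      show ?thesis by (rule trip[OF w uw wv])
    qed
  qed
qed

lemma sym_pow: "a [^]\<^bsub>sym_group n\<^esub> (m::nat) = a ^^ m"
  by (induction m) (simp_all add: sym_group_mult sym_group_one funpow_Suc_right del: funpow.simps)

lemma alt_pow: "a [^]\<^bsub>alt_group n\<^esub> (m::nat) = a ^^ m"
  by (induction m) (simp_all add: alt_group_mult alt_group_one funpow_Suc_right del: funpow.simps)

lemma alt_conj_class:
  "conj_class (alt_group n) a = {g \<circ> a \<circ> inv' g | g. g permutes {1..n} \<and> evenperm g}"
proof -
  have "\<And>g. g \<in> carrier (alt_group n) \<Longrightarrow> g \<otimes>\<^bsub>alt_group n\<^esub> a \<otimes>\<^bsub>alt_group n\<^esub> inv\<^bsub>alt_group n\<^esub> g = g \<circ> a \<circ> inv' g"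
    by (simp add: alt_group_mult alt_group_inv_equality)
  then show ?thesis unfolding conj_class_def alt_group_carrier[symmetric]
    by (smt (verit, best) Collect_cong)
qed

lemma alt_reduce_class:
  assumes h: "h permutes {1..n}" "\<not> evenperm h" "h \<circ> a = a \<circ> h"
  shows "conj_class (alt_group n) a = conj_class (sym_group n) a"
proof
  show "conj_class (alt_group n) a \<subseteq> conj_class (sym_group n) a"
    unfolding alt_conj_class sym_conj_class by blast
  show "conj_class (sym_group n) a \<subseteq> conj_class (alt_group n) a"
  proof
    fix x assume "x \<in> conj_class (sym_group n) a"
    then obtain g where g: "g permutes {1..n}" "x = g \<circ> a \<circ> inv' g" unfolding sym_conj_class by blast
    show "x \<in> conj_class (alt_group n) a"
    proof (cases "evenperm g")
      case True then show ?thesis unfolding alt_conj_class using g by blast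
    next
      case False
      have pg: "permutation g" "permutation h" using g(1) h(1) permutation_permutes by blast+
      have ev: "evenperm (g \<circ> h)" using evenperm_comp[OF pg] False h(2) by simp
      have gh: "g \<circ> h permutes {1..n}" using permutes_compose[OF h(1) g(1)] .
      have e1: "h \<circ> a \<circ> inv' h = a" using h(3) permutes_inv_o(1)[OF h(1)]
        by (metis comp_assoc comp_id)
      have "x = (g \<circ> h) \<circ> a \<circ> inv' (g \<circ> h)"
        unfolding conj_comp[OF g(1) h(1)] e1 g(2) by (rule refl)
      then show ?thesis unfolding alt_conj_class using gh ev by blast
    qed
  qed
qed

lemma alt_reduce_edges:
  assumes "C \<subseteq> carrier (alt_group n)"
  shows "killing_edges (alt_group n) C = killing_edges (sym_group n) C"
proof -
  have "centralizer (alt_group n) x \<inter> C = centralizer (sym_group n) x \<inter> C" for x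
    using assms unfolding centralizer_def
    by (auto simp: alt_group_mult sym_group_mult alt_group_carrier sym_group_carrier)
  then show ?thesis unfolding killing_edges_def by (simp add: alt_group_mult sym_group_mult)
qed

definition Hs :: "nat \<Rightarrow> nat \<Rightarrow> nat \<Rightarrow> nat" where
  "Hs p m k = (if 1 \<le> k \<and> k \<le> m then k + p else if p < k \<and> k \<le> p + m then k - p else k)"

lemma Hs_swapidseq: "m \<le> p \<Longrightarrow> swapidseq m (Hs p m)"
proof (induction m)
  case 0
  have "Hs p 0 = id" by (auto simp: Hs_def fun_eq_iff)
  then show ?case by (metis swapidseq.id)
next
  case (Suc m)
  have "Hs p (Suc m) = transpose (Suc m) (Suc m + p) \<circ> Hs p m"
    using Suc(2) by (auto simp: Hs_def fun_eq_iff transpose_def)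
  moreover have "swapidseq (Suc m) (transpose (Suc m) (Suc m + p) \<circ> Hs p m)"
    by (rule swapidseq.comp_Suc) (use Suc in auto)
  ultimately show ?case by metis
qed

lemma Hs_odd: "odd p \<Longrightarrow> \<not> evenperm (Hs p p)"
  using evenperm_unique[OF Hs_swapidseq[of p p]] by simp

lemma Hs_permutes: "Hs p p permutes {1..2*p}"
  by (rule perm_from_inj) (auto simp: Hs_def inj_on_def split: if_splits)

lemma Hs_comm: "p \<ge> 1 \<Longrightarrow> Hs p p \<circ> s2 p = s2 p \<circ> Hs p p"
  by (auto simp: fun_eq_iff Hs_def s2_def)

lemma odd_comm_type1:
  assumes p: "p \<ge> 2" and fp: "f permutes {1..2*p}" and af: "a \<circ> f = f \<circ> s1 p"
  shows "\<exists>h. h permutes {1..2*p} \<and> \<not> evenperm h \<and> h \<circ> a = a \<circ> h"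
proof -
  let ?h = "transpose (f (p+1)) (f (p+2))"
  have ne: "f (p+1) \<noteq> f (p+2)" using permutes_inj[OF fp] by (simp add: inj_eq)
  have hp: "?h permutes {1..2*p}" using permutes_in_image[OF fp] p by (intro permutes_swap_id) auto
  have ap: "a permutes {1..2*p}" unfolding conj_from_eq[OF fp af]
    using permutes_subset[OF s1_permutes, of p "{1..2*p}"] p fp
    by (intro permutes_compose[OF permutes_inv[OF fp]] permutes_compose[OF _ fp]) auto
  have afk: "a (f k) = f (s1 p k)" for k using fun_cong[OF af, of k] by simp
  have "a \<circ> ?h = ?h \<circ> a"
  proof (rule commute_disjoint[of a ?h "{f (p+1), f (p+2)}"])
    show "inj a" using permutes_inj[OF ap] .
    show "inj ?h" by simp
    show "x \<in> {f (p+1), f (p+2)}" if "?h x \<noteq> x" for x using that by (auto simp: transpose_def split: if_splits)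
    show "a x = x" if "x \<in> {f (p+1), f (p+2)}" for x using that afk by (auto simp: s1_def)
  qed
  moreover have "\<not> evenperm ?h" using ne by (simp add: evenperm_swap)
  ultimately show ?thesis using hp by metis
qed

lemma odd_comm_type2:
  assumes p: "p \<ge> 1" "odd p" and fp: "f permutes {1..2*p}" and af: "a \<circ> f = f \<circ> s2 p"
  shows "\<exists>h. h permutes {1..2*p} \<and> \<not> evenperm h \<and> h \<circ> a = a \<circ> h"
proof -
  define h where "h = f \<circ> Hs p p \<circ> inv' f"
  have hp: "h permutes {1..2*p}" unfolding h_def
    by (intro permutes_compose[OF permutes_inv[OF fp]] permutes_compose[OF _ fp] Hs_permutes)
  have pf: "permutation f" "permutation (Hs p p)" "permutation (inv' f)"
    using fp Hs_permutes permutes_inv[OF fp] permutation_permutes by blast+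
  have "evenperm h = evenperm (Hs p p)" unfolding h_def
    using evenperm_comp[OF permutation_compose[OF pf(1) pf(2)] pf(3)] evenperm_comp[OF pf(1,2)]
      evenperm_inv[OF pf(1)] by (simp, blast)
  then have odd: "\<not> evenperm h" using Hs_odd[OF p(2)] by simp
  have a_eq: "a = f \<circ> s2 p \<circ> inv' f" by (rule conj_from_eq[OF fp af])
  have hs: "Hs p p (s2 p k) = s2 p (Hs p p k)" for k using fun_cong[OF Hs_comm[OF p(1)], of k] by simp
  have "h \<circ> a = a \<circ> h" unfolding h_def a_eq using fp hs
    by (auto simp: fun_eq_iff permutes_inverses)
  then show ?thesis using hp odd by blast
qed


lemma conj_class_sub:
  assumes "group G" "a \<in> carrier G" shows "conj_class G a \<subseteq> carrier G"
proof -
  interpret group G by (rule assms(1))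
  show ?thesis unfolding conj_class_def using assms(2) by auto
qed

theorem proposition7p7:
  fixes p :: nat and G :: "(nat \<Rightarrow> nat) monoid" and a :: "nat \<Rightarrow> nat"
  assumes "prime p" and "p \<ge> 5"
    and "G = sym_group (2 * p) \<or> G = alt_group (2 * p)"
    and "a \<in> carrier G" and "a \<noteq> \<one>\<^bsub>G\<^esub>" and "p_element G p a"
  shows "killing_irreducible G (conj_class G a)"
proof -
  have p3: "p \<ge> 3" using assms(2) by simp
  have oddp: "odd p" using prime_odd_nat[OF assms(1)] assms(2) by simp
  have grp: "group G" using assms(3) sym_group_is_group alt_group_is_group by auto
  obtain k where ok: "group.ord G a = p ^ k" using assms(6) unfolding p_element_def by blast
  have "a [^]\<^bsub>G\<^esub> (p ^ k) = \<one>\<^bsub>G\<^esub>" using group.pow_ord_eq_1[OF grp assms(4)] ok by simp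
  then have pow: "a ^^ (p ^ k) = id" using assms(3)
    by (auto simp: sym_pow alt_pow sym_group_one alt_group_one)
  have ap: "a permutes {1..2*p}" using assms(3,4) by (auto simp: sym_group_carrier alt_group_carrier)
  have an: "a \<noteq> id" using assms(3,5) by (auto simp: sym_group_one alt_group_one)
  have both: "killing_irreducible (sym_group (2*p)) (conj_class (sym_group (2*p)) a) \<and>
      (\<exists>h. h permutes {1..2*p} \<and> \<not> evenperm h \<and> h \<circ> a = a \<circ> h)"
    using classify[OF assms(1) p3 ap an pow]
  proof
    assume "\<exists>f. f permutes {1..2*p} \<and> a \<circ> f = f \<circ> s1 p"
    then obtain f where f: "f permutes {1..2*p}" "a \<circ> f = f \<circ> s1 p" by blast
    show ?thesis using type1[OF assms(1,2) f] odd_comm_type1[OF _ f] p3 by simp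
  next
    assume "\<exists>f. f permutes {1..2*p} \<and> a \<circ> f = f \<circ> s2 p"
    then obtain f where f: "f permutes {1..2*p}" "a \<circ> f = f \<circ> s2 p" by blast
    show ?thesis using type2[OF assms(1,2) f] odd_comm_type2[OF _ oddp f] p3 by simp
  qed
  show ?thesis
  proof (cases "G = sym_group (2 * p)")
    case True
    then show ?thesis using both by simp
  next
    case False
    then have G: "G = alt_group (2 * p)" using assms(3) by simp
    obtain h where h: "h permutes {1..2*p}" "\<not> evenperm h" "h \<circ> a = a \<circ> h" using both by blast
    have Ceq: "conj_class G a = conj_class (sym_group (2*p)) a"
      unfolding G by (rule alt_reduce_class[OF h])
    have "conj_class (sym_group (2*p)) a \<subseteq> carrier (alt_group (2*p))"
      using conj_class_sub[OF grp assms(4)] G Ceq by simp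
    then have Eeq: "killing_edges G (conj_class (sym_group (2*p)) a)
        = killing_edges (sym_group (2*p)) (conj_class (sym_group (2*p)) a)"
      unfolding G by (rule alt_reduce_edges)
    show ?thesis using both unfolding killing_irreducible_def Ceq Eeq by simp
  qed
qed

end
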